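(* Let $k>24$ be an integer. Then for every finite point set $\mathcal{P}\subset\mathbb{R}^2$, the trapezoidal Yao graph $\mathsf{TY}_k(\mathcal{P})$ is a geometric $\tau_k$-spanner, where $$\tau_k=\left(1-2\sin\Big(\frac{\pi}{k}+\frac{\pi}{8}\Big)\right)^{-1}.$$
   Context: For $\theta\in[\pi/4,\pi/3)$ the curved trapezoid is the open set $\mathcal{T}_\theta=\{(x,y)\mid 0<x<1,\ 0<y<\sin\theta,\ x^2+y^2<1,\ (x-1)^2+y^2<1\}$; its critical arc is the closed arc $\{(\cos\phi,\sin\phi)\mid 0\le\phi\le\theta\}$ of its boundary (the boundary arc not incident to the origin). For a set $\mathcal{O}$: $\mathcal{O}^-$ is its reflection through the $x$-axis; $\mathrm{Rot}_{\gamma}(\mathcal{O})$ its counterclockwise rotation by $\gamma$ about the origin; $\lambda\mathcal{O}$ its dilation by factor $\lambda$ about the origin; $u+\mathcal{O}$ its translate by $u$ (these operations are applied to the critical arc as well). Trapezoidal Yao graph $\mathsf{TY}_k(\mathcal{P})$: let $\theta=\lceil k/8\rceil\cdot 2\pi/k$. For each $u\in\mathcal{P}$ and $j=0,\dots,k-1$ let $\Gamma_{j1}=\mathrm{Rot}_{2j\pi/k}(\mathcal{T}_\theta)$ and $\Gamma_{j2}=\mathrm{Rot}_{2j\pi/k}(\mathcal{T}_\theta^-)$. For each $i=1,2$, grow the shape $u+\lambda\Gamma_{ji}$ by increasing $\lambda$ from $0$ until its boundary first hits some point $v\in\mathcal{P}\setminus\{u\}$; if $v$ lies on the (transformed) critical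 arc, add the edge $\overrightarrow{uv}$, otherwise add nothing. A graph $G$ with vertex set $\mathcal{P}$ (edges regarded as undirected with Euclidean lengths) is a geometric $t$-spanner if for all $u,v\in\mathcal{P}$ the shortest $u$-$v$ path in $G$ has length at most $t|uv|$. *)

theory Defs
  imports "HOL-Analysis.Analysis"
begin

definition curved_trapezoid :: "real \<Rightarrow> complex set" where
  "curved_trapezoid \<theta> = {z. 0 < Re z \<and> Re z < 1 \<and> 0 < Im z \<and> Im z < sin \<theta>
      \<and> cmod z < 1 \<and> cmod (z - 1) < 1}"

definition critical_arc :: "real \<Rightarrow> complex set" where
  "critical_arc \<theta> = {cis \<phi> | \<phi>. 0 \<le> \<phi> \<and> \<phi> \<le> \<theta>}"

definition TY_angle :: "nat \<Rightarrow> real" where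
  "TY_angle k = real_of_int \<lceil>real k / 8\<rceil> * 2 * pi / real k"

text \<open>The map sending the base trapezoid to cone j,i: i = 1 is Rot (no reflection),
  i = 2 is Rot composed with reflection through the x-axis (complex conjugation).\<close>
definition cone_map :: "nat \<Rightarrow> nat \<Rightarrow> nat \<Rightarrow> complex \<Rightarrow> complex" where
  "cone_map k j i z = cis (2 * real j * pi / real k) * (if i = 1 then z else cnj z)"

definition grow :: "complex \<Rightarrow> real \<Rightarrow> complex set \<Rightarrow> complex set" where
  "grow u r S = (\<lambda>z. u + complex_of_real r * z) ` S"

definition hit_at :: "complex set \<Rightarrow> complex \<Rightarrow> complex set \<Rightarrow> complex \<Rightarrow> real \<Rightarrow> bool" where
  "hit_at P u S v r \<longleftrightarrow> v \<in> P \<and> v \<noteq> u \<and> 0 < r \<and> v \<in> frontier (grow u r S) \<and>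
     (\<forall>r'. 0 < r' \<and> r' < r \<longrightarrow> (\<forall>w \<in> P - {u}. w \<notin> closure (grow u r' S)))"

definition first_hit :: "complex set \<Rightarrow> complex \<Rightarrow> complex set \<Rightarrow> complex \<Rightarrow> bool" where
  "first_hit P u S v \<longleftrightarrow> (\<exists>r. hit_at P u S v r)"

definition valid_selection ::
  "nat \<Rightarrow> complex set \<Rightarrow> (complex \<Rightarrow> nat \<Rightarrow> nat \<Rightarrow> complex) \<Rightarrow> bool" where
  "valid_selection k P sel \<longleftrightarrow>
     (\<forall>u\<in>P. \<forall>j<k. \<forall>i\<in>{1,2}.
        (\<exists>v. first_hit P u (cone_map k j i ` curved_trapezoid (TY_angle k)) v) \<longrightarrow>
        first_hit P u (cone_map k j i ` curved_trapezoid (TY_angle k)) (sel u j i))"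

definition TY_edges ::
  "nat \<Rightarrow> complex set \<Rightarrow> (complex \<Rightarrow> nat \<Rightarrow> nat \<Rightarrow> complex) \<Rightarrow> (complex \<times> complex) set" where
  "TY_edges k P sel = {(u, sel u j i) | u j i. u \<in> P \<and> j < k \<and> i \<in> {1,2} \<and>
     (\<exists>r. hit_at P u (cone_map k j i ` curved_trapezoid (TY_angle k)) (sel u j i) r \<and>
          sel u j i \<in> grow u r (cone_map k j i ` critical_arc (TY_angle k)))}"

definition path_length :: "complex list \<Rightarrow> real" where
  "path_length xs = (\<Sum>i < length xs - 1. dist (xs ! i) (xs ! Suc i))"

definition geometric_spanner :: "complex set \<Rightarrow> (complex \<times> complex) set \<Rightarrow> real \<Rightarrow> bool" where
  "geometric_spanner P E t \<longleftrightarrow>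
     (\<forall>u\<in>P. \<forall>v\<in>P. \<exists>xs. xs \<noteq> [] \<and> hd xs = u \<and> last xs = v \<and>
        (\<forall>i. Suc i < length xs \<longrightarrow> (xs ! i, xs ! Suc i) \<in> E \<or> (xs ! Suc i, xs ! i) \<in> E) \<and>
        path_length xs \<le> t * dist u v)"

definition tau :: "nat \<Rightarrow> real" where
  "tau k = 1 / (1 - 2 * sin (pi / real k + pi / 8))"

end

theory Submission
  imports Defs
begin


lemma theta_bounds:
  assumes "k > (24::nat)"
  shows "pi/4 \<le> TY_angle k" "TY_angle k < pi/3"
proof -
  define c where "c = \<lceil>real k / 8\<rceil>"
  have k0: "real k \<ge> 25" using assms by simp
  have c1: "real k / 8 \<le> of_int c" unfolding c_def by simp
  have c2: "of_int c < real k / 8 + 1" unfolding c_def by linarith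
  have "c * 8 < int k + 8" using c2 by (simp add: field_simps)
  hence c3: "real_of_int c * 8 \<le> real k + 7" by linarith
  have th: "TY_angle k = pi * (2 * of_int c / real k)" unfolding TY_angle_def c_def by simp
  have "2 * of_int c / real k \<ge> 1/4" using c1 k0 by (simp add: field_simps)
  thus "pi/4 \<le> TY_angle k" unfolding th using pi_gt_zero
    by (metis mult.right_neutral mult_left_mono order_less_imp_le times_divide_eq_right)
  have "2 * of_int c / real k \<le> 1/4 + 7/(4*real k)" using c3 k0 by (simp add: field_simps)
  also have "7/(4*real k) \<le> 7/100" using k0 by (simp add: field_simps)
  finally have "2 * of_int c / real k < 1/3" by simp
  thus "TY_angle k < pi/3" unfolding th using pi_gt_zero
    by (metis mult.commute mult_less_cancel_left_pos times_divide_eq_left mult_1)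
qed



definition Tc :: "real \<Rightarrow> complex set" where
  "Tc \<theta> = {z. 0 \<le> Re z \<and> Re z \<le> 1 \<and> 0 \<le> Im z \<and> Im z \<le> sin \<theta> \<and> cmod z \<le> 1 \<and> cmod (z - 1) \<le> 1}"

lemma closed_Tc: "closed (Tc \<theta>)"
  unfolding Tc_def
  by (intro closed_Collect_conj closed_Collect_le continuous_intros)

lemma T_sub_Tc: "curved_trapezoid \<theta> \<subseteq> Tc \<theta>"
  unfolding Tc_def curved_trapezoid_def by auto

lemma closure_T:
  assumes s: "0 < sin \<theta>"
  shows "closure (curved_trapezoid \<theta>) = Tc \<theta>"
proof
  show "closure (curved_trapezoid \<theta>) \<subseteq> Tc \<theta>"
    by (intro closure_minimal T_sub_Tc closed_Tc)
next
  define x0 where "x0 = Complex (1/2) (sin \<theta> / 2)"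
  have s1: "sin \<theta> \<le> 1" by simp
  have ss: "sin \<theta> * sin \<theta> \<le> 1" using s s1 by (simp add: mult_le_one)
  have nx0: "cmod x0 < 1"
  proof -
    have "(cmod x0)^2 < 1" unfolding x0_def cmod_power2 using ss
      by (simp add: power2_eq_square)
    thus ?thesis using abs_square_less_1[of "cmod x0"] by simp
  qed
  have nx1: "cmod (x0 - 1) < 1"
  proof -
    have "(cmod (x0 - 1))^2 < 1" unfolding x0_def cmod_power2 using ss
      by (simp add: power2_eq_square)
    thus ?thesis using abs_square_less_1[of "cmod (x0-1)"] by simp
  qed
  have mem: "(of_real (1-t)) * y + of_real t * x0 \<in> curved_trapezoid \<theta>"
    if y: "y \<in> Tc \<theta>" and t: "0 < t" "t \<le> 1" for y t
  proof -
    let ?z = "(of_real (1-t)) * y + of_real t * x0"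
    from y have y1: "0 \<le> Re y" "Re y \<le> 1" "0 \<le> Im y" "Im y \<le> sin \<theta>" "cmod y \<le> 1" "cmod (y - 1) \<le> 1"
      unfolding Tc_def by auto
    have r: "Re ?z = (1-t) * Re y + t/2" "Im ?z = (1-t) * Im y + t * sin \<theta> / 2"
      unfolding x0_def by simp_all
    have a1: "(1-t) * Re y \<le> (1 - t) * 1" using y1 t by (intro mult_left_mono) auto
    have a2: "(1-t) * Im y \<le> (1 - t) * sin \<theta>" using y1 t by (simp add: mult_left_mono)
    have a3: "0 \<le> (1-t) * Re y" "0 \<le> (1-t) * Im y" using y1 t by simp_all
    have n1: "cmod ?z < 1"
    proof -
      have "cmod ?z \<le> cmod (of_real (1-t) * y) + cmod (of_real t * x0)" by (rule norm_triangle_ineq)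
      also have "\<dots> = (1-t) * cmod y + t * cmod x0" using t by (simp add: norm_mult del: of_real_diff)
      also have "\<dots> < 1"
      proof -
        have "(1-t) * cmod y \<le> (1-t) * 1" using y1 t by (intro mult_left_mono) auto
        moreover have "t * cmod x0 < t * 1" using nx0 t by (intro mult_strict_left_mono) auto
        ultimately show ?thesis by simp
      qed
      finally show ?thesis .
    qed
    have n2: "cmod (?z - 1) < 1"
    proof -
      have e: "?z - 1 = of_real (1-t) * (y - 1) + of_real t * (x0 - 1)" by (simp add: algebra_simps)
      have "cmod (?z - 1) \<le> cmod (of_real (1-t) * (y-1)) + cmod (of_real t * (x0-1))"
        unfolding e by (rule norm_triangle_ineq)
      also have "\<dots> = (1-t) * cmod (y-1) + t * cmod (x0-1)" using t by (simp add: norm_mult del: of_real_diff)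
      also have "\<dots> < 1"
      proof -
        have "(1-t) * cmod (y-1) \<le> (1-t) * 1" using y1 t by (intro mult_left_mono) auto
        moreover have "t * cmod (x0-1) < t * 1" using nx1 t by (intro mult_strict_left_mono) auto
        ultimately show ?thesis by simp
      qed
      finally show ?thesis .
    qed
    have ts: "0 < t * sin \<theta>" using t s by simp
    have "0 < Re ?z" "Re ?z < 1" "0 < Im ?z" "Im ?z < sin \<theta>"
      unfolding r using a1 a2 a3 t ts by (simp_all add: algebra_simps)
    thus ?thesis unfolding curved_trapezoid_def using n1 n2 by simp
  qed
  show "Tc \<theta> \<subseteq> closure (curved_trapezoid \<theta>)"
  proof
    fix y assume y: "y \<in> Tc \<theta>"
    show "y \<in> closure (curved_trapezoid \<theta>)"
      unfolding closure_approachable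
    proof (intro allI impI)
      fix e :: real assume e: "e > 0"
      define t where "t = min 1 (e / (cmod (x0 - y) + 1))"
      have t0: "0 < t" "t \<le> 1" unfolding t_def using e by (auto intro!: divide_pos_pos add_nonneg_pos)
      have "dist (of_real (1-t) * y + of_real t * x0) y = cmod (of_real t * (x0 - y))"
        by (simp add: dist_norm algebra_simps)
      also have "\<dots> = t * cmod (x0 - y)" using t0 by (simp add: norm_mult)
      also have "\<dots> < e"
      proof -
        have "t * cmod (x0 - y) \<le> (e / (cmod (x0 - y) + 1)) * cmod (x0 - y)"
          unfolding t_def by (intro mult_right_mono) auto
        also have "\<dots> < e"
        proof -
          have p: "0 < cmod (x0 - y) + 1" by (simp add: add_nonneg_pos)
          have "e * cmod (x0 - y) < e * (cmod (x0 - y) + 1)" using e by simp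
          thus ?thesis using p by (simp add: divide_less_eq mult.commute)
        qed
        finally show ?thesis .
      qed
      finally show "\<exists>z\<in>curved_trapezoid \<theta>. dist z y < e" using mem[OF y t0] by blast
    qed
  qed
qed


definition cmap :: "nat \<Rightarrow> nat \<Rightarrow> nat \<Rightarrow> real \<Rightarrow> complex \<Rightarrow> complex" where
  "cmap k j i r z = of_real r * cone_map k j i z"

lemma linear_cmap: "linear (cmap k j i r)"
  by (rule linearI) (auto simp: cmap_def cone_map_def scaleR_conv_of_real algebra_simps)

lemma inj_cmap: assumes "r \<noteq> 0" shows "inj (cmap k j i r)"
proof (rule injI)
  fix x y assume "cmap k j i r x = cmap k j i r y"
  hence "cone_map k j i x = cone_map k j i y" using assms by (simp add: cmap_def)
  thus "x = y" unfolding cone_map_def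
    by (cases "i = 1") (auto simp: cis_neq_zero)
qed

lemma grow_cmap: "grow u r (cone_map k j i ` A) = (+) u ` (cmap k j i r ` A)"
  unfolding grow_def cmap_def by (auto simp: image_image)

lemma closure_grow:
  assumes "r > 0" "0 < sin \<theta>"
  shows "closure (grow u r (cone_map k j i ` curved_trapezoid \<theta>)) = grow u r (cone_map k j i ` Tc \<theta>)"
proof -
  have "closure (cmap k j i r ` curved_trapezoid \<theta>) = cmap k j i r ` closure (curved_trapezoid \<theta>)"
    using closure_injective_linear_image[OF linear_cmap inj_cmap, of r k j i "curved_trapezoid \<theta>"] assms
    by simp
  thus ?thesis unfolding grow_cmap closure_translation closure_T[OF assms(2)] by simp
qed

lemma norm_cone_map: "cmod (cone_map k j i z) = cmod z"
  unfolding cone_map_def by (simp add: norm_mult)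


lemma polar_Tc:
  assumes "z \<in> Tc \<theta>"
  shows "\<exists>\<psi>. 0 \<le> \<psi> \<and> \<psi> \<le> pi/2 \<and> z = of_real (cmod z) * cis \<psi>"
proof -
  have "0 \<le> Re z" "0 \<le> Im z" using assms unfolding Tc_def by auto
  hence "0 \<le> Arg z" "Arg z \<le> pi/2" using Arg_less_0[of z] Arg_Re_nonneg[of z] by auto
  moreover have "z = of_real (cmod z) * cis (Arg z)" using rcis_cmod_Arg[of z] by (simp add: rcis_def)
  ultimately show ?thesis by blast
qed

lemma arc_Tc:
  assumes "z \<in> Tc \<theta>" "cmod z = 1" "0 < \<theta>" "\<theta> < pi/2"
  shows "z \<in> critical_arc \<theta>"
proof -
  obtain \<psi> where p: "0 \<le> \<psi>" "\<psi> \<le> pi/2" "z = of_real (cmod z) * cis \<psi>" using polar_Tc[OF assms(1)] by blast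
  hence z: "z = cis \<psi>" using assms(2) by simp
  have "sin \<psi> \<le> sin \<theta>" using assms(1) unfolding Tc_def z by simp
  hence "\<psi> \<le> \<theta>" using sin_mono_le_eq[of \<psi> \<theta>] p assms by simp
  thus ?thesis unfolding critical_arc_def z using p by auto
qed

lemma cis_Tc:
  assumes "0 \<le> \<phi>" "\<phi> \<le> \<theta>" "\<theta> < pi/3"
  shows "cis \<phi> \<in> Tc \<theta>"
proof -
  have a: "0 \<le> cos \<phi>" using assms by (intro cos_ge_zero) auto
  have b: "0 \<le> sin \<phi>" using assms by (intro sin_ge_zero) auto
  have c: "sin \<phi> \<le> sin \<theta>" using sin_mono_le_eq[of \<phi> \<theta>] assms by simp
  have d: "cos (pi/3) \<le> cos \<phi>" using cos_mono_le_eq[of "pi/3" \<phi>] assms by simp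
  have "(cmod (cis \<phi> - 1))^2 = 2 - 2 * cos \<phi>"
    unfolding cmod_power2 by (simp add: power2_eq_square algebra_simps)
  also have "\<dots> \<le> 1" using d cos_60 by simp
  finally have "cmod (cis \<phi> - 1) \<le> 1" by (simp add: power_le_one_iff)
  thus ?thesis unfolding Tc_def using a b c by auto
qed

definition insec :: "real \<Rightarrow> real \<Rightarrow> complex \<Rightarrow> bool" where
  "insec \<gamma> L w \<longleftrightarrow> (\<exists>\<psi>. 0 \<le> \<psi> \<and> \<psi> \<le> L \<and> w = of_real (cmod w) * cis (\<gamma> + \<psi>))"

lemma foot1:
  assumes "z \<in> Tc \<theta>" "t > 0" "pi/2 \<le> L"
  shows "insec a L (of_real t * (cis a * z))"
proof -
  obtain \<psi> where p: "0 \<le> \<psi>" "\<psi> \<le> pi/2" "z = of_real (cmod z) * cis \<psi>" using polar_Tc[OF assms(1)] by blast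
  have "of_real t * (cis a * z) = of_real (cmod (of_real t * (cis a * z))) * cis (a + \<psi>)"
    using assms(2) by (subst p(3)) (simp add: norm_mult cis_mult[symmetric])
  thus ?thesis unfolding insec_def using p assms(3) by (intro exI[of _ \<psi>]) auto
qed

lemma foot2:
  assumes "z \<in> Tc \<theta>" "t > 0" "pi/2 \<le> L"
  shows "insec (a - L) L (of_real t * (cis a * cnj z))"
proof -
  obtain \<psi> where p: "0 \<le> \<psi>" "\<psi> \<le> pi/2" "z = of_real (cmod z) * cis \<psi>" using polar_Tc[OF assms(1)] by blast
  have "cnj z = of_real (cmod z) * cis (- \<psi>)" by (subst p(3)) (simp add: cis_cnj)
  hence "of_real t * (cis a * cnj z) = of_real (cmod (of_real t * (cis a * cnj z))) * cis ((a - L) + (L - \<psi>))"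
    using assms(2) by (simp add: norm_mult cis_mult)
  thus ?thesis unfolding insec_def using p assms(3) by (intro exI[of _ "L - \<psi>"]) auto
qed

lemma insec_angle:
  assumes "insec \<gamma> L b" "v = of_real (cmod v) * cis (\<gamma> + \<psi>v)" "L - D \<le> \<psi>v" "\<psi>v \<le> D" "D \<le> pi"
  shows "cmod b * cmod v * cos D \<le> Re (b * cnj v)"
proof -
  obtain \<psi> where p: "0 \<le> \<psi>" "\<psi> \<le> L" "b = of_real (cmod b) * cis (\<gamma> + \<psi>)" using assms(1) unfolding insec_def by blast
  have "b * cnj v = of_real (cmod b * cmod v) * cis (\<psi> - \<psi>v)"
    by (subst p(3), subst assms(2)) (simp add: cis_cnj cis_mult)
  hence e: "Re (b * cnj v) = cmod b * cmod v * cos (\<psi> - \<psi>v)" by simp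
  have "\<bar>\<psi> - \<psi>v\<bar> \<le> D" using p assms by auto
  hence "cos D \<le> cos \<bar>\<psi> - \<psi>v\<bar>" using cos_mono_le_eq[of D "\<bar>\<psi> - \<psi>v\<bar>"] assms by simp
  hence "cos D \<le> cos (\<psi> - \<psi>v)" by simp
  thus ?thesis unfolding e by (intro mult_left_mono) auto
qed

lemma yao:
  fixes b v :: complex
  assumes "cmod b \<le> cmod v" "cmod b * cmod v * (1 - c^2/2) \<le> Re (b * cnj v)" "0 \<le> c" "c \<le> 1"
  shows "cmod (b - v) \<le> cmod v - (1 - c) * cmod b"
proof -
  define s where "s = cmod b"
  define V where "V = cmod v"
  have s0: "0 \<le> s" unfolding s_def by simp
  have sq: "(cmod (b - v))^2 = s^2 + V^2 - 2 * Re (b * cnj v)"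
    unfolding s_def V_def cmod_power2 by (simp add: power2_eq_square algebra_simps)
  have "(cmod (b - v))^2 \<le> s^2 + V^2 - 2 * (s * V * (1 - c^2/2))"
    unfolding sq using assms(2) unfolding s_def V_def by simp
  also have "\<dots> \<le> (V - (1 - c) * s)^2"
  proof -
    have "s^2 + V^2 - 2 * (s * V * (1 - c^2/2)) - (V - (1 - c) * s)^2 = - (c * (2 - c) * s * (V - s))"
      by (simp add: power2_eq_square algebra_simps)
    moreover have "0 \<le> c * (2 - c) * s * (V - s)"
      using assms s0 unfolding s_def V_def by (intro mult_nonneg_nonneg) auto
    ultimately show ?thesis by linarith
  qed
  finally have "(cmod (b - v))^2 \<le> (V - (1 - c) * s)^2" .
  moreover have "0 \<le> V - (1 - c) * s"
  proof -
    have "(1 - c) * s \<le> 1 * s" using assms s0 by (intro mult_right_mono) auto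
    thus ?thesis using assms(1) unfolding s_def V_def by simp
  qed
  ultimately show ?thesis unfolding s_def V_def by (rule power2_le_imp_le)
qed


lemma mem_closure_grow:
  assumes "r > 0" "0 < sin \<theta>"
  shows "w \<in> closure (grow u r (cone_map k j i ` curved_trapezoid \<theta>)) \<longleftrightarrow>
         (\<exists>z\<in>Tc \<theta>. w = u + of_real r * cone_map k j i z)"
proof -
  have e: "closure (grow u r (cone_map k j i ` curved_trapezoid \<theta>)) = grow u r (cone_map k j i ` Tc \<theta>)"
    by (rule closure_grow[OF assms])
  show ?thesis unfolding e unfolding grow_def by auto
qed

lemma hit_edge:
  assumes u: "u \<in> P" and j: "j < k" and i: "i \<in> {1,2}"
    and vs: "valid_selection k P sel"
    and th: "0 < TY_angle k" "TY_angle k < pi/3"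
    and Q: "\<And>z t. z \<in> Tc (TY_angle k) \<Longrightarrow> t > 0 \<Longrightarrow> insec \<gamma> L (of_real t * cone_map k j i z)"
    and m: "m \<in> P" "m \<noteq> u" "\<zeta> \<in> critical_arc (TY_angle k)"
       "m = u + of_real (cmod (m - u)) * cone_map k j i \<zeta>"
    and mini: "\<And>p. p \<in> P \<Longrightarrow> p \<noteq> u \<Longrightarrow> insec \<gamma> L (p - u) \<Longrightarrow> cmod (m - u) \<le> cmod (p - u)"
  shows "\<exists>b. (u, b) \<in> TY_edges k P sel \<and> insec \<gamma> L (b - u) \<and> cmod (b - u) = cmod (m - u) \<and> b \<in> P"
proof -
  define \<theta> where "\<theta> = TY_angle k"
  define S where "S = cone_map k j i ` curved_trapezoid \<theta>"
  define r where "r = cmod (m - u)"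
  have r0: "r > 0" using m(2) unfolding r_def by simp
  have s0: "0 < sin \<theta>" unfolding \<theta>_def using th by (intro sin_gt_zero) (auto intro: order_less_le_trans)
  have thpi2: "\<theta> < pi/2" unfolding \<theta>_def using th by simp
  have clo: "w \<in> closure (grow u r' S) \<longleftrightarrow> (\<exists>z\<in>Tc \<theta>. w = u + of_real r' * cone_map k j i z)"
    if "r' > 0" for w r' unfolding S_def by (rule mem_closure_grow[OF that s0])
  have sec: "insec \<gamma> L (w - u)" if h: "w \<in> closure (grow u r' S)" "r' > 0" for w r'
  proof -
    obtain z where z: "z \<in> Tc \<theta>" "w = u + of_real r' * cone_map k j i z" using h(1) clo[OF h(2)] by blast
    show ?thesis using Q[of z r'] z that unfolding \<theta>_def by simp
  qed
  have nrm: "cmod (w - u) \<le> r'" if h: "w \<in> closure (grow u r' S)" "r' > 0" for w r'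
  proof -
    obtain z where z: "z \<in> Tc \<theta>" "w = u + of_real r' * cone_map k j i z" using h(1) clo[OF h(2)] by blast
    have "cmod z \<le> 1" using z(1) unfolding Tc_def by simp
    hence "r' * cmod z \<le> r' * 1" using that by (intro mult_left_mono) auto
    thus ?thesis using z that by (simp add: norm_mult norm_cone_map)
  qed
  obtain \<phi> where phi: "0 \<le> \<phi>" "\<phi> \<le> \<theta>" "\<zeta> = cis \<phi>" using m(3) unfolding critical_arc_def \<theta>_def by auto
  have zT: "\<zeta> \<in> Tc \<theta>" using phi th unfolding \<theta>_def by (simp add: cis_Tc)
  have mcl: "m \<in> closure (grow u r S)" using clo[OF r0] zT m(4) unfolding r_def by blast
  have mnot: "m \<notin> grow u r S"
  proof
    assume "m \<in> grow u r S"
    then obtain z where z: "z \<in> curved_trapezoid \<theta>" "m = u + of_real r * cone_map k j i z"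
      unfolding grow_def S_def by auto
    have "cmod z < 1" using z(1) unfolding curved_trapezoid_def by simp
    hence "r * cmod z < r * 1" using r0 by (intro mult_strict_left_mono) auto
    hence "cmod (m - u) < r" using z r0 by (simp add: norm_mult norm_cone_map)
    thus False unfolding r_def by simp
  qed
  have hm: "hit_at P u S m r"
    unfolding hit_at_def
  proof (intro conjI allI impI ballI)
    show "m \<in> P" "m \<noteq> u" "0 < r" using m r0 by auto
    show "m \<in> frontier (grow u r S)" unfolding frontier_def using mcl mnot interior_subset by blast
  next
    fix r' w assume r': "0 < r' \<and> r' < r" and w: "w \<in> P - {u}"
    show "w \<notin> closure (grow u r' S)"
    proof
      assume wc: "w \<in> closure (grow u r' S)"
      have "cmod (m - u) \<le> cmod (w - u)" using mini[of w] w sec[OF wc] r' by auto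
      also have "\<dots> \<le> r'" using nrm[OF wc] r' by auto
      finally show False using r' unfolding r_def by simp
    qed
  qed
  hence "\<exists>v. first_hit P u S v" unfolding first_hit_def by blast
  hence "first_hit P u S (sel u j i)" using vs u j i unfolding valid_selection_def S_def \<theta>_def by blast
  then obtain rb where hb: "hit_at P u S (sel u j i) rb" unfolding first_hit_def by blast
  define b where "b = sel u j i"
  have b: "b \<in> P" "b \<noteq> u" "0 < rb" "b \<in> frontier (grow u rb S)"
    and bemp: "\<forall>r'. 0 < r' \<and> r' < rb \<longrightarrow> (\<forall>w\<in>P - {u}. w \<notin> closure (grow u r' S))"
    using hb unfolding hit_at_def b_def by auto
  have bcl: "b \<in> closure (grow u rb S)" using b(4) unfolding frontier_def by auto
  obtain zb where zb: "zb \<in> Tc \<theta>" "b = u + of_real rb * cone_map k j i zb" using clo[OF b(3)] bcl by blast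
  have bsec: "insec \<gamma> L (b - u)" using sec[OF bcl b(3)] .
  have "r \<le> cmod (b - u)" using mini[of b] b bsec unfolding r_def by auto
  have rbr: "rb \<le> r"
  proof (rule ccontr)
    assume "\<not> rb \<le> r"
    hence "m \<notin> closure (grow u r S)" using bemp r0 m by auto
    thus False using mcl by simp
  qed
  have nb: "cmod (b - u) = rb * cmod zb" using zb b(3) by (simp add: norm_mult norm_cone_map)
  have z1: "cmod zb \<le> 1" using zb(1) unfolding Tc_def by simp
  have le1: "rb * cmod zb \<le> rb * 1" using z1 b(3) by (intro mult_left_mono) auto
  have eq1: "rb = r" using le1 \<open>r \<le> cmod (b - u)\<close> nb rbr by linarith
  have "rb * cmod zb = rb * 1" using le1 \<open>r \<le> cmod (b - u)\<close> nb rbr by linarith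
  hence "cmod zb = 1" using b(3) by simp
  note eqs = eq1 this
  have "zb \<in> critical_arc \<theta>" using arc_Tc[OF zb(1) eqs(2)] th thpi2 unfolding \<theta>_def by simp
  hence "b \<in> grow u rb (cone_map k j i ` critical_arc \<theta>)" using zb(2) unfolding grow_def by auto
  hence "(u, b) \<in> TY_edges k P sel"
    unfolding TY_edges_def using u j i hb unfolding b_def S_def \<theta>_def by blast
  thus ?thesis using bsec eqs nb b(1) unfolding r_def by auto
qed



lemma pimono: "a \<le> b \<Longrightarrow> pi * a \<le> pi * (b::real)"
  by (rule mult_left_mono) auto

lemma nums:
  assumes "k > (24::nat)"
  shows "pi/2 \<le> of_int \<lceil>real k/4\<rceil> * (2*pi/real k)"
    "of_int \<lceil>real k/4\<rceil> * (2*pi/real k) \<le> 2 * TY_angle k"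
    "of_int \<lceil>real k/4\<rceil> * (2*pi/real k) + 2*pi/real k \<le> 2 * (pi/4 + 2*pi/real k)"
    "pi/4 + 2*pi/real k \<le> of_int \<lceil>real k/4\<rceil> * (2*pi/real k)"
    "pi/4 + 2*pi/real k \<le> pi"
    "0 < 2*pi/real k"
    "0 \<le> 2 * sin (pi / real k + pi / 8)" "2 * sin (pi / real k + pi / 8) < 1"
proof -
  define M where "M = \<lceil>real k/4\<rceil>"
  define c where "c = \<lceil>real k/8\<rceil>"
  have k0: "real k \<ge> 25" using assms by simp
  have M1: "real k / 4 \<le> of_int M" unfolding M_def by simp
  have M2: "of_int M < real k / 4 + 1" unfolding M_def by linarith
  have c1: "real k / 8 \<le> of_int c" unfolding c_def by simp
  have Mc: "M \<le> 2 * c" unfolding M_def using c1 by (simp add: ceiling_le_iff)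
  hence Mc': "real_of_int M \<le> 2 * of_int c" by linarith
  have eM: "of_int M * (2*pi/real k) = pi * (2 * of_int M / real k)" by simp
  have eth: "TY_angle k = pi * (2 * of_int c / real k)" unfolding TY_angle_def c_def by simp
  have e1: "pi/2 = pi * (1/2)" "pi/4 = pi * (1/4)" "2*pi/real k = pi * (2 / real k)" "pi = pi * 1" by simp_all
  show "pi/2 \<le> of_int \<lceil>real k/4\<rceil> * (2*pi/real k)"
    unfolding M_def[symmetric] eM e1(1) using M1 k0 by (intro pimono) (simp add: field_simps)
  show "of_int \<lceil>real k/4\<rceil> * (2*pi/real k) \<le> 2 * TY_angle k"
  proof -
    have "2 * of_int M / real k \<le> 2 * (2 * of_int c / real k)" using Mc' k0 by (simp add: field_simps)
    hence "pi * (2 * of_int M / real k) \<le> pi * (2 * (2 * of_int c / real k))" by (rule pimono)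
    thus ?thesis unfolding M_def[symmetric] eM eth by (simp add: ac_simps)
  qed
  show "of_int \<lceil>real k/4\<rceil> * (2*pi/real k) + 2*pi/real k \<le> 2 * (pi/4 + 2*pi/real k)"
  proof -
    have a: "(2 * of_int M + 2) / real k \<le> (real k / 2 + 4) / real k"
      using M2 by (intro divide_right_mono) auto
    have b: "(2 * of_int M + 2) / real k = 2 * of_int M / real k + 2 / real k" by (simp add: add_divide_distrib)
    have c: "(real k / 2 + 4) / real k = 2 * (1/4 + 2 / real k)" using k0 by (simp add: field_simps)
    have "2 * of_int M / real k + 2 / real k \<le> 2 * (1/4 + 2 / real k)" using a unfolding b c .
    hence "pi * (2 * of_int M / real k + 2 / real k) \<le> pi * (2 * (1/4 + 2 / real k))" by (rule pimono)
    thus ?thesis unfolding M_def[symmetric] eM by (simp add: algebra_simps)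
  qed
  show "pi/4 + 2*pi/real k \<le> of_int \<lceil>real k/4\<rceil> * (2*pi/real k)"
  proof -
    have a: "(real k / 4 + 2) / real k \<le> (2 * of_int M) / real k"
      using M1 k0 by (intro divide_right_mono) auto
    have c: "(real k / 4 + 2) / real k = 1/4 + 2 / real k" using k0 by (simp add: field_simps)
    have "1/4 + 2 / real k \<le> 2 * of_int M / real k" using a unfolding c .
    hence "pi * (1/4 + 2 / real k) \<le> pi * (2 * of_int M / real k)" by (rule pimono)
    thus ?thesis unfolding M_def[symmetric] eM by (simp add: algebra_simps)
  qed
  show "pi/4 + 2*pi/real k \<le> pi"
  proof -
    have "1/4 + 2 / real k \<le> 1" using k0 by (simp add: field_simps)
    hence "pi * (1/4 + 2 / real k) \<le> pi * 1" by (rule pimono)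
    thus ?thesis by (simp add: algebra_simps)
  qed
  show "0 < 2*pi/real k" using k0 by simp
  have x0: "0 \<le> pi / real k + pi / 8" using k0 by simp
  have x1: "pi / real k + pi / 8 < pi / 6"
  proof -
    have "1 / real k + 1/8 < 1/6" using k0 by (simp add: field_simps)
    hence "pi * (1 / real k + 1/8) < pi * (1/6)" by (intro mult_strict_left_mono) auto
    thus ?thesis by (simp add: algebra_simps)
  qed
  have "sin (pi / real k + pi / 8) < sin (pi/6)"
  proof (rule sin_monotone_2pi)
    show "- (pi / 2) \<le> pi / real k + pi / 8" using x0 pi_gt_zero by linarith
    show "pi / real k + pi / 8 < pi / 6" by (rule x1)
    show "pi / 6 \<le> pi / 2" using pi_gt_zero by linarith
  qed
  thus "2 * sin (pi / real k + pi / 8) < 1" using sin_30 by simp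
  have x2: "pi / real k + pi / 8 \<le> pi" using x1 pi_gt_zero by linarith
  have "0 \<le> sin (pi / real k + pi / 8)" using x0 x2 by (rule sin_ge_zero)
  thus "0 \<le> 2 * sin (pi / real k + pi / 8)" by simp
qed

lemma cis_mod:
  assumes "k > (0::nat)"
  shows "cis (2 * real (nat (J mod int k)) * pi / real k) = cis (of_int J * (2*pi/real k))"
proof -
  have h0: "real (nat (J mod int k)) = of_int (J mod int k)" using assms by simp
  have h: "of_int J = of_int (J mod int k) + real k * (of_int (J div int k) :: real)"
    by (metis mod_mult_div_eq of_int_add of_int_mult of_int_of_nat_eq)
  have e: "2 * real (nat (J mod int k)) * pi / real k = of_int J * (2*pi/real k) + 2 * pi * of_int (- (J div int k))"
    unfolding h0 h using assms by (simp add: field_simps)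
  have c1: "cis (2 * pi * of_int (- (J div int k))) = 1" by (rule cis_multiple_2pi) simp
  show ?thesis unfolding e cis_mult[symmetric] c1 by simp
qed



lemma cone_edge:
  assumes k: "k > 24" and fin: "finite P" and vs: "valid_selection k P sel"
    and u: "u \<in> P" and v: "v \<in> P" and uv: "u \<noteq> v"
  shows "\<exists>b. (u,b) \<in> TY_edges k P sel \<and> b \<in> P \<and> 0 < cmod (b - u) \<and>
           cmod (b - v) \<le> cmod (v - u) - (1 - 2 * sin (pi / real k + pi / 8)) * cmod (b - u)"
proof -
  define \<delta> where "\<delta> = 2*pi/real k"
  define D where "D = pi/4 + 2*pi/real k"
  define Mi where "Mi = \<lceil>real k/4\<rceil>"
  define L where "L = of_int \<lceil>real k/4\<rceil> * (2*pi/real k)"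
  define \<theta> where "\<theta> = TY_angle k"
  define c where "c = 2 * sin (pi / real k + pi / 8)"
  note N = nums[OF k, folded L_def D_def \<theta>_def c_def]
  have d0: "0 < \<delta>" using N unfolding \<delta>_def by simp
  have thb: "pi/4 \<le> \<theta>" "\<theta> < pi/3" using theta_bounds[OF k] unfolding \<theta>_def by auto
  have th0: "0 < \<theta>" using thb pi_gt_zero by linarith
  have k0: "k > 0" using k by simp
  define \<alpha> where "\<alpha> = Arg (v - u)"
  define J where "J = \<lceil>(\<alpha> - D) / \<delta>\<rceil>"
  define \<gamma> where "\<gamma> = of_int J * \<delta>"
  define \<psi>v where "\<psi>v = \<alpha> - \<gamma>"
  have J1: "(\<alpha> - D) / \<delta> \<le> of_int J" unfolding J_def by simp
  have J2: "of_int J < (\<alpha> - D) / \<delta> + 1" unfolding J_def by linarith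
  have g1: "\<alpha> - D \<le> \<gamma>" using J1 d0 unfolding \<gamma>_def by (simp add: divide_le_eq)
  have g2: "\<gamma> < \<alpha> - D + \<delta>"
  proof -
    have "of_int J * \<delta> < ((\<alpha> - D) / \<delta> + 1) * \<delta>" using J2 d0 by (intro mult_strict_right_mono) auto
    moreover have "((\<alpha> - D) / \<delta> + 1) * \<delta> = \<alpha> - D + \<delta>" using d0 by (simp add: field_simps)
    ultimately show ?thesis unfolding \<gamma>_def by linarith
  qed
  have pv1: "\<psi>v \<le> D" using g1 unfolding \<psi>v_def by simp
  have pv2: "L - D \<le> \<psi>v" using g2 N(3) unfolding \<psi>v_def \<delta>_def by linarith
  have vrep: "v - u = of_real (cmod (v - u)) * cis (\<gamma> + \<psi>v)"
    using rcis_cmod_Arg[of "v - u"] unfolding \<psi>v_def \<alpha>_def by (simp add: rcis_def)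
  have vsec: "insec \<gamma> L (v - u)"
    unfolding insec_def using vrep pv1 pv2 N(4) by (intro exI[of _ \<psi>v]) auto
  define j1 where "j1 = nat (J mod int k)"
  define j2 where "j2 = nat ((J + Mi) mod int k)"
  have j1k: "j1 < k" unfolding j1_def using k0 by (simp add: nat_less_iff)
  have j2k: "j2 < k" unfolding j2_def using k0 by (simp add: nat_less_iff)
  have cj1: "cis (2 * real j1 * pi / real k) = cis \<gamma>"
    unfolding j1_def \<gamma>_def \<delta>_def by (rule cis_mod[OF k0])
  have cj2: "cis (2 * real j2 * pi / real k) = cis (\<gamma> + L)"
  proof -
    have "cis (2 * real j2 * pi / real k) = cis (of_int (J + Mi) * (2*pi/real k))"
      unfolding j2_def by (rule cis_mod[OF k0])
    also have "of_int (J + Mi) * (2*pi/real k) = \<gamma> + L"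
      unfolding \<gamma>_def L_def Mi_def \<delta>_def by (simp add: algebra_simps)
    finally show ?thesis .
  qed
  have Q1: "insec \<gamma> L (of_real t * cone_map k j1 1 z)" if "z \<in> Tc \<theta>" "t > 0" for z t
    unfolding cone_map_def cj1 using foot1[OF that N(1)] by simp
  have Q2: "insec \<gamma> L (of_real t * cone_map k j2 2 z)" if "z \<in> Tc \<theta>" "t > 0" for z t
    unfolding cone_map_def cj2 using foot2[OF that N(1), of "\<gamma> + L"] by simp
  define Ps where "Ps = {p \<in> P. p \<noteq> u \<and> insec \<gamma> L (p - u)}"
  have Psf: "finite Ps" unfolding Ps_def using fin by simp
  have vPs: "v \<in> Ps" unfolding Ps_def using v uv vsec by simp
  define \<mu> where "\<mu> = Min ((\<lambda>p. cmod (p - u)) ` Ps)"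
  have "\<mu> \<in> (\<lambda>p. cmod (p - u)) ` Ps" unfolding \<mu>_def using Psf vPs by (intro Min_in) auto
  then obtain m where mPs: "m \<in> Ps" and mmu: "cmod (m - u) = \<mu>" by auto
  have mmin: "cmod (m - u) \<le> cmod (p - u)" if "p \<in> Ps" for p
    unfolding mmu \<mu>_def using Psf that by (intro Min_le) auto
  have mP: "m \<in> P" "m \<noteq> u" "insec \<gamma> L (m - u)" using mPs unfolding Ps_def by auto
  have mini: "\<And>p. p \<in> P \<Longrightarrow> p \<noteq> u \<Longrightarrow> insec \<gamma> L (p - u) \<Longrightarrow> cmod (m - u) \<le> cmod (p - u)"
    using mmin unfolding Ps_def by auto
  obtain \<psi>m where pm: "0 \<le> \<psi>m" "\<psi>m \<le> L" "m - u = of_real (cmod (m - u)) * cis (\<gamma> + \<psi>m)"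
    using mP(3) unfolding insec_def by blast
  have mrep: "m = u + of_real (cmod (m - u)) * cis (\<gamma> + \<psi>m)" using pm(3) by (simp add: algebra_simps)
  have "\<exists>b. (u, b) \<in> TY_edges k P sel \<and> insec \<gamma> L (b - u) \<and> cmod (b - u) = cmod (m - u) \<and> b \<in> P"
  proof (cases "\<psi>m \<le> \<theta>")
    case True
    show ?thesis
    proof (rule hit_edge[OF u j1k _ vs _ _ Q1 mP(1) mP(2) _ _ mini])
      show "cis \<psi>m \<in> critical_arc (TY_angle k)" unfolding critical_arc_def using True pm(1) \<theta>_def by auto
      show "m = u + of_real (cmod (m - u)) * cone_map k j1 1 (cis \<psi>m)"
        unfolding cone_map_def cj1 using mrep by (simp add: cis_mult)
    qed (use th0 thb \<theta>_def in auto)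
  next
    case False
    show ?thesis
    proof (rule hit_edge[OF u j2k _ vs _ _ Q2 mP(1) mP(2) _ _ mini])
      show "cis (L - \<psi>m) \<in> critical_arc (TY_angle k)" unfolding critical_arc_def using False pm N(2) \<theta>_def by auto
      show "m = u + of_real (cmod (m - u)) * cone_map k j2 2 (cis (L - \<psi>m))"
        unfolding cone_map_def cj2 using mrep by (simp add: cis_mult cis_cnj)
    qed (use th0 thb \<theta>_def in auto)
  qed
  then obtain b where b: "(u, b) \<in> TY_edges k P sel" "insec \<gamma> L (b - u)" "cmod (b - u) = cmod (m - u)" "b \<in> P"
    by blast
  have bv: "cmod (b - u) \<le> cmod (v - u)" using b(3) mmin[OF vPs] by simp
  have ang: "cmod (b - u) * cmod (v - u) * cos D \<le> Re ((b - u) * cnj (v - u))"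
    by (rule insec_angle[OF b(2) vrep pv2 pv1 N(5)])
  have cD: "cos D = 1 - c^2/2"
  proof -
    have eD: "D = 2 * (pi / real k + pi / 8)" unfolding D_def by (simp add: field_simps)
    have "cos D = 1 - 2 * (sin (pi / real k + pi / 8))^2" by (simp only: eD cos_double_sin)
    thus ?thesis unfolding c_def by (simp add: power2_eq_square)
  qed
  have "cmod ((b - u) - (v - u)) \<le> cmod (v - u) - (1 - c) * cmod (b - u)"
    by (rule yao[OF bv]) (use ang cD N(7) N(8) in auto)
  hence "cmod (b - v) \<le> cmod (v - u) - (1 - c) * cmod (b - u)" by simp
  moreover have "0 < cmod (b - u)" using b(3) mP(2) by simp
  ultimately show ?thesis using b(1) b(4) unfolding c_def by blast
qed



lemma path_length_Cons:
  assumes "xs \<noteq> []"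
  shows "path_length (x # xs) = dist x (hd xs) + path_length xs"
proof -
  obtain y ys where xs: "xs = y # ys" using assms by (cases xs) auto
  have "path_length (x # xs) = (\<Sum>i < Suc (length ys). dist ((x # xs) ! i) ((x # xs) ! Suc i))"
    unfolding path_length_def xs by simp
  also have "\<dots> = dist x y + (\<Sum>i < length ys. dist (xs ! i) (xs ! Suc i))"
    unfolding sum.lessThan_Suc_shift by (simp add: xs)
  also have "(\<Sum>i < length ys. dist (xs ! i) (xs ! Suc i)) = path_length xs"
    unfolding path_length_def xs by simp
  finally show ?thesis using xs by simp
qed

theorem lemma10:
  fixes k :: nat and P :: "complex set" and sel :: "complex \<Rightarrow> nat \<Rightarrow> nat \<Rightarrow> complex"
  assumes "k > 24" and "finite P" and "valid_selection k P sel"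
  shows "geometric_spanner P (TY_edges k P sel) (tau k)"
proof -
  define E where "E = TY_edges k P sel"
  define c where "c = 2 * sin (pi / real k + pi / 8)"
  have c1: "c < 1" "0 \<le> c" using nums[OF assms(1)] unfolding c_def by auto
  have tau: "tau k * (1 - c) = 1" "0 \<le> tau k" unfolding tau_def c_def[symmetric] using c1 by auto
  define cnt where "cnt = (\<lambda>u v :: complex. card {q \<in> P \<times> P. dist (fst q) (snd q) < dist u v})"
  have fin2: "finite (P \<times> P)" using assms(2) by simp
  have main: "\<forall>u v. u \<in> P \<longrightarrow> v \<in> P \<longrightarrow> cnt u v = n \<longrightarrow>
      (\<exists>xs. xs \<noteq> [] \<and> hd xs = u \<and> last xs = v \<and>
        (\<forall>i. Suc i < length xs \<longrightarrow> (xs ! i, xs ! Suc i) \<in> E \<or> (xs ! Suc i, xs ! i) \<in> E) \<and>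
        path_length xs \<le> tau k * dist u v)" for n
  proof (induction n rule: less_induct)
    case (less n)
    show ?case
    proof (intro allI impI)
      fix u v assume u: "u \<in> P" and v: "v \<in> P" and n: "cnt u v = n"
      show "\<exists>xs. xs \<noteq> [] \<and> hd xs = u \<and> last xs = v \<and>
        (\<forall>i. Suc i < length xs \<longrightarrow> (xs ! i, xs ! Suc i) \<in> E \<or> (xs ! Suc i, xs ! i) \<in> E) \<and>
        path_length xs \<le> tau k * dist u v"
      proof (cases "u = v")
        case True
        show ?thesis using True by (intro exI[of _ "[u]"]) (simp add: path_length_def)
      next
        case False
        obtain b where b: "(u,b) \<in> E" "b \<in> P" "0 < cmod (b - u)"
          "cmod (b - v) \<le> cmod (v - u) - (1 - c) * cmod (b - u)"
          using cone_edge[OF assms(1) assms(2) assms(3) u v False] unfolding E_def c_def by blast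
        have dub: "dist u b = cmod (b - u)" by (simp add: dist_norm norm_minus_commute)
        have duv: "dist u v = cmod (v - u)" by (simp add: dist_norm norm_minus_commute)
        have dbv: "dist b v = cmod (b - v)" by (simp add: dist_norm)
        have pos: "0 < (1 - c) * cmod (b - u)" using c1 b(3) by simp
        have lt: "dist b v < dist u v" using b(4) pos unfolding dbv duv by linarith
        have sub: "{q \<in> P \<times> P. dist (fst q) (snd q) < dist b v} \<subset> {q \<in> P \<times> P. dist (fst q) (snd q) < dist u v}"
        proof
          show "{q \<in> P \<times> P. dist (fst q) (snd q) < dist b v} \<subseteq> {q \<in> P \<times> P. dist (fst q) (snd q) < dist u v}"
            using lt by auto
          have "(b, v) \<in> {q \<in> P \<times> P. dist (fst q) (snd q) < dist u v}" using b(2) v lt by simp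
          moreover have "(b, v) \<notin> {q \<in> P \<times> P. dist (fst q) (snd q) < dist b v}" by simp
          ultimately show "{q \<in> P \<times> P. dist (fst q) (snd q) < dist b v} \<noteq> {q \<in> P \<times> P. dist (fst q) (snd q) < dist u v}"
            by blast
        qed
        have "cnt b v < cnt u v" unfolding cnt_def
          by (rule psubset_card_mono[OF _ sub]) (use fin2 in auto)
        then obtain xs where xs: "xs \<noteq> []" "hd xs = b" "last xs = v"
          "\<forall>i. Suc i < length xs \<longrightarrow> (xs ! i, xs ! Suc i) \<in> E \<or> (xs ! Suc i, xs ! i) \<in> E"
          "path_length xs \<le> tau k * dist b v"
          using less.IH[of "cnt b v"] b(2) v n by blast
        have edges: "\<forall>i. Suc i < length (u # xs) \<longrightarrow> ((u # xs) ! i, (u # xs) ! Suc i) \<in> E \<or> ((u # xs) ! Suc i, (u # xs) ! i) \<in> E"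
        proof (intro allI impI)
          fix i assume i: "Suc i < length (u # xs)"
          show "((u # xs) ! i, (u # xs) ! Suc i) \<in> E \<or> ((u # xs) ! Suc i, (u # xs) ! i) \<in> E"
          proof (cases i)
            case 0
            have "xs ! 0 = b" using xs(1,2) by (simp add: hd_conv_nth)
            thus ?thesis using 0 b(1) by simp
          next
            case (Suc i')
            thus ?thesis using xs(4) i by simp
          qed
        qed
        have "path_length (u # xs) = dist u b + path_length xs" using path_length_Cons[OF xs(1)] xs(2) by simp
        also have "\<dots> \<le> dist u b + tau k * dist b v" using xs(5) by simp
        also have "\<dots> \<le> tau k * dist u v"
        proof -
          have "tau k * dist b v \<le> tau k * (dist u v - (1 - c) * dist u b)"
            using b(4) tau(2) unfolding dbv duv dub by (intro mult_left_mono) auto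
          also have "\<dots> = tau k * dist u v - (tau k * (1 - c)) * dist u b" by (simp add: algebra_simps)
          finally show ?thesis unfolding tau(1) by simp
        qed
        finally show ?thesis using xs edges by (intro exI[of _ "u # xs"]) auto
      qed
    qed
  qed
  show ?thesis unfolding geometric_spanner_def E_def[symmetric] using main by blast
qed


end
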